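(* Let $G$ and $H$ be connected nontrivial graphs of orders $n_1$ and $n_2$, respectively. If the vertex set of $G_{SR}$ can be partitioned into $\beta(G_{SR})$ cliques, then $$dim_s(G\boxtimes H) = n_2\cdot dim_s(G) + n_1\cdot dim_s(H) - dim_s(G)\cdot dim_s(H).$$
   Context: For a connected graph $G$ with shortest-path distance $d_G$, a vertex $w$ strongly resolves $u,v$ if $d_G(w,u)=d_G(w,v)+d_G(v,u)$ or $d_G(w,v)=d_G(w,u)+d_G(u,v)$; $dim_s(G)$ is the minimum cardinality of a set $S\subseteq V(G)$ such that every pair of vertices is strongly resolved by some vertex of $S$. A vertex $u$ is maximally distant from $v$ if every neighbor $w$ of $u$ satisfies $d_G(v,w)\le d_G(u,v)$; $u,v$ are mutually maximally distant if each is maximally distant from the other. The strong resolving graph $G_{SR}$ has vertex set $V(G)$, with $u,v$ adjacent iff mutually maximally distant in $G$. $\beta$ denotes the independence number; a clique is a set of pairwise adjacent vertices. The strong product $G\boxtimes H$ has vertex set $V(G)\times V(H)$, with $(a,b)\sim(c,d)$ iff ($a=c$ and $bd\in E(H)$) or ($ac\in E(G)$ and $b=d$) or ($ac\in E(G)$ and $bd\in E(H)$). Nontrivial means at least two vertices. *)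

theory Defs
  imports Main "HOL-Library.Disjoint_Sets"
begin

definition graph :: "'a set \<Rightarrow> ('a \<Rightarrow> 'a \<Rightarrow> bool) \<Rightarrow> bool" where
  "graph V E \<longleftrightarrow> finite V \<and> V \<noteq> {} \<and>
     (\<forall>u v. E u v \<longrightarrow> u \<in> V \<and> v \<in> V) \<and>
     (\<forall>u v. E u v \<longrightarrow> E v u) \<and> (\<forall>u. \<not> E u u)"

definition walk :: "'a set \<Rightarrow> ('a \<Rightarrow> 'a \<Rightarrow> bool) \<Rightarrow> 'a list \<Rightarrow> bool" where
  "walk V E xs \<longleftrightarrow> xs \<noteq> [] \<and> set xs \<subseteq> V \<and>
     (\<forall>i. Suc i < length xs \<longrightarrow> E (xs ! i) (xs ! Suc i))"

definition connected_graph :: "'a set \<Rightarrow> ('a \<Rightarrow> 'a \<Rightarrow> bool) \<Rightarrow> bool" where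
  "connected_graph V E \<longleftrightarrow> graph V E \<and>
     (\<forall>u\<in>V. \<forall>v\<in>V. \<exists>xs. walk V E xs \<and> hd xs = u \<and> last xs = v)"

definition gdist :: "'a set \<Rightarrow> ('a \<Rightarrow> 'a \<Rightarrow> bool) \<Rightarrow> 'a \<Rightarrow> 'a \<Rightarrow> nat" where
  "gdist V E u v = (LEAST n. \<exists>xs. walk V E xs \<and> hd xs = u \<and> last xs = v \<and> length xs = Suc n)"

definition strongly_resolves :: "'a set \<Rightarrow> ('a \<Rightarrow> 'a \<Rightarrow> bool) \<Rightarrow> 'a \<Rightarrow> 'a \<Rightarrow> 'a \<Rightarrow> bool" where
  "strongly_resolves V E w u v \<longleftrightarrow>
     gdist V E w u = gdist V E w v + gdist V E v u \<or>
     gdist V E w v = gdist V E w u + gdist V E u v"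

definition strong_resolving_set :: "'a set \<Rightarrow> ('a \<Rightarrow> 'a \<Rightarrow> bool) \<Rightarrow> 'a set \<Rightarrow> bool" where
  "strong_resolving_set V E S \<longleftrightarrow> S \<subseteq> V \<and>
     (\<forall>u\<in>V. \<forall>v\<in>V. \<exists>w\<in>S. strongly_resolves V E w u v)"

definition sdim :: "'a set \<Rightarrow> ('a \<Rightarrow> 'a \<Rightarrow> bool) \<Rightarrow> nat" where
  "sdim V E = (LEAST k. \<exists>S. strong_resolving_set V E S \<and> card S = k)"

definition maximally_distant :: "'a set \<Rightarrow> ('a \<Rightarrow> 'a \<Rightarrow> bool) \<Rightarrow> 'a \<Rightarrow> 'a \<Rightarrow> bool" where
  "maximally_distant V E u v \<longleftrightarrow> (\<forall>w. E u w \<longrightarrow> gdist V E v w \<le> gdist V E u v)"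

definition mutually_maximally_distant :: "'a set \<Rightarrow> ('a \<Rightarrow> 'a \<Rightarrow> bool) \<Rightarrow> 'a \<Rightarrow> 'a \<Rightarrow> bool" where
  "mutually_maximally_distant V E u v \<longleftrightarrow> maximally_distant V E u v \<and> maximally_distant V E v u"

definition sr_adj :: "'a set \<Rightarrow> ('a \<Rightarrow> 'a \<Rightarrow> bool) \<Rightarrow> 'a \<Rightarrow> 'a \<Rightarrow> bool" where
  "sr_adj V E u v \<longleftrightarrow> u \<in> V \<and> v \<in> V \<and> u \<noteq> v \<and> mutually_maximally_distant V E u v"

definition independent_set :: "'a set \<Rightarrow> ('a \<Rightarrow> 'a \<Rightarrow> bool) \<Rightarrow> 'a set \<Rightarrow> bool" where
  "independent_set V E I \<longleftrightarrow> I \<subseteq> V \<and> (\<forall>u\<in>I. \<forall>v\<in>I. \<not> E u v)"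

definition independence_number :: "'a set \<Rightarrow> ('a \<Rightarrow> 'a \<Rightarrow> bool) \<Rightarrow> nat" where
  "independence_number V E = Max (card ` {I. independent_set V E I})"

definition clique :: "'a set \<Rightarrow> ('a \<Rightarrow> 'a \<Rightarrow> bool) \<Rightarrow> 'a set \<Rightarrow> bool" where
  "clique V E C \<longleftrightarrow> C \<subseteq> V \<and> (\<forall>u\<in>C. \<forall>v\<in>C. u \<noteq> v \<longrightarrow> E u v)"

definition strong_prod_adj :: "('a \<Rightarrow> 'a \<Rightarrow> bool) \<Rightarrow> ('b \<Rightarrow> 'b \<Rightarrow> bool) \<Rightarrow> 'a \<times> 'b \<Rightarrow> 'a \<times> 'b \<Rightarrow> bool" where
  "strong_prod_adj E1 E2 x y \<longleftrightarrow>
     (fst x = fst y \<and> E2 (snd x) (snd y)) \<or>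
     (E1 (fst x) (fst y) \<and> snd x = snd y) \<or>
     (E1 (fst x) (fst y) \<and> E2 (snd x) (snd y))"

end

theory Submission
  imports Defs
begin

definition pw :: "'a set \<Rightarrow> ('a \<Rightarrow> 'a \<Rightarrow> bool) \<Rightarrow> nat \<Rightarrow> 'a \<Rightarrow> 'a \<Rightarrow> bool" where
  "pw V E n u v \<longleftrightarrow> (\<exists>xs. walk V E xs \<and> hd xs = u \<and> last xs = v \<and> length xs = Suc n)"

lemma gdist_pw: "gdist V E u v = (LEAST n. pw V E n u v)"
  unfolding gdist_def pw_def by simp

lemma pw_0: "pw V E 0 u v \<longleftrightarrow> u = v \<and> u \<in> V"
proof
  assume "pw V E 0 u v" then show "u = v \<and> u \<in> V" unfolding pw_def walk_def by (auto simp: length_Suc_conv)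
next
  assume "u = v \<and> u \<in> V" then show "pw V E 0 u v" unfolding pw_def walk_def by (intro exI[of _ "[u]"]) auto
qed

lemma pw_Suc: "pw V E (Suc n) u v \<longleftrightarrow> u \<in> V \<and> (\<exists>w. E u w \<and> pw V E n w v)"
proof
  assume "pw V E (Suc n) u v"
  then obtain xs where w: "walk V E xs" "hd xs = u" "last xs = v" "length xs = Suc (Suc n)"
    unfolding pw_def by blast
  then obtain ys where xs: "xs = u # ys" and ly: "length ys = Suc n"
    by (auto simp: length_Suc_conv)
  have yne: "ys \<noteq> []" using ly by auto
  have "walk V E ys" unfolding walk_def
  proof (intro conjI allI impI)
    show "ys \<noteq> []" by fact
    show "set ys \<subseteq> V" using w(1) xs unfolding walk_def by auto
    fix i assume "Suc i < length ys"
    then have "Suc (Suc i) < length xs" using xs by simp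
    then have "E (xs ! Suc i) (xs ! Suc (Suc i))" using w(1) unfolding walk_def by blast
    then show "E (ys ! i) (ys ! Suc i)" using xs by simp
  qed
  moreover have "E u (hd ys)"
  proof -
    have "E (xs ! 0) (xs ! Suc 0)" using w(1) w(4) unfolding walk_def by simp
    then show ?thesis using xs yne by (simp add: hd_conv_nth)
  qed
  moreover have "last ys = v" using w(3) xs yne by simp
  moreover have "u \<in> V" using w(1) xs unfolding walk_def by auto
  ultimately show "u \<in> V \<and> (\<exists>w. E u w \<and> pw V E n w v)"
    unfolding pw_def using ly by blast
next
  assume "u \<in> V \<and> (\<exists>w. E u w \<and> pw V E n w v)"
  then obtain w ys where u: "u \<in> V" "E u w" and y: "walk V E ys" "hd ys = w" "last ys = v" "length ys = Suc n"
    unfolding pw_def by blast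
  have yne: "ys \<noteq> []" using y(4) by auto
  have "walk V E (u # ys)" unfolding walk_def
  proof (intro conjI allI impI)
    show "u # ys \<noteq> []" by simp
    show "set (u # ys) \<subseteq> V" using u y(1) unfolding walk_def by auto
    fix i assume i: "Suc i < length (u # ys)"
    show "E ((u # ys) ! i) ((u # ys) ! Suc i)"
    proof (cases i)
      case 0 then show ?thesis using u y(2) yne by (simp add: hd_conv_nth)
    next
      case (Suc j)
      then have "Suc j < length ys" using i by simp
      then have "E (ys ! j) (ys ! Suc j)" using y(1) unfolding walk_def by blast
      then show ?thesis using Suc by simp
    qed
  qed
  moreover have "hd (u # ys) = u" "last (u # ys) = v" "length (u # ys) = Suc (Suc n)"
    using y yne by auto
  ultimately show "pw V E (Suc n) u v" unfolding pw_def by (intro exI[of _ "u # ys"]) (intro conjI)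
qed

definition rr :: "'a set \<Rightarrow> ('a \<Rightarrow> 'a \<Rightarrow> bool) \<Rightarrow> nat \<Rightarrow> 'a \<Rightarrow> 'a \<Rightarrow> bool" where
  "rr V E k u v \<longleftrightarrow> (\<exists>n\<le>k. pw V E n u v)"

lemma rr_0: "rr V E 0 u v \<longleftrightarrow> u = v \<and> u \<in> V"
  unfolding rr_def by (simp add: pw_0)

lemma rr_Suc: "rr V E (Suc k) u v \<longleftrightarrow> (u = v \<and> u \<in> V) \<or> (u \<in> V \<and> (\<exists>w. E u w \<and> rr V E k w v))"
proof
  assume "rr V E (Suc k) u v"
  then obtain n where n: "n \<le> Suc k" "pw V E n u v" unfolding rr_def by blast
  show "(u = v \<and> u \<in> V) \<or> (u \<in> V \<and> (\<exists>w. E u w \<and> rr V E k w v))"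
  proof (cases n)
    case 0 then show ?thesis using n by (auto simp add: pw_0)
  next
    case (Suc m)
    then have "u \<in> V \<and> (\<exists>w. E u w \<and> pw V E m w v)" using n(2) pw_Suc[of V E m u v] by simp
    then obtain w where "u \<in> V" "E u w" "pw V E m w v" by blast
    moreover have "m \<le> k" using n(1) Suc by simp
    ultimately have "u \<in> V \<and> (\<exists>w. E u w \<and> rr V E k w v)" unfolding rr_def by blast
    then show ?thesis by blast
  qed
next
  assume "(u = v \<and> u \<in> V) \<or> (u \<in> V \<and> (\<exists>w. E u w \<and> rr V E k w v))"
  then show "rr V E (Suc k) u v"
  proof
    assume "u = v \<and> u \<in> V"
    then have "pw V E 0 u v" using pw_0[of V E u v] by blast
    then show ?thesis unfolding rr_def by blast
  next
    assume "u \<in> V \<and> (\<exists>w. E u w \<and> rr V E k w v)"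
    then obtain w n where "u \<in> V" "E u w" "n \<le> k" "pw V E n w v" unfolding rr_def by blast
    then have "pw V E (Suc n) u v" using pw_Suc[of V E n u v] by blast
    moreover have "Suc n \<le> Suc k" using \<open>n \<le> k\<close> by simp
    ultimately show ?thesis unfolding rr_def by blast
  qed
qed

lemma rr_mono: "rr V E k u v \<Longrightarrow> k \<le> k' \<Longrightarrow> rr V E k' u v"
  unfolding rr_def using order_trans by blast

lemma rr_refl: "u \<in> V \<Longrightarrow> rr V E k u u"
  using rr_mono[of V E 0 u u k] by (simp add: rr_0)

lemma rr_step: "u \<in> V \<Longrightarrow> u' = u \<or> E u u' \<Longrightarrow> rr V E k u' v \<Longrightarrow> rr V E (Suc k) u v"
  using rr_mono[of V E k u v "Suc k"] by (auto simp: rr_Suc)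

lemma connected_pw: "connected_graph V E \<longleftrightarrow> graph V E \<and> (\<forall>u\<in>V. \<forall>v\<in>V. \<exists>n. pw V E n u v)"
proof -
  have "(\<exists>xs. walk V E xs \<and> hd xs = u \<and> last xs = v) \<longleftrightarrow> (\<exists>n. pw V E n u v)" for u v
  proof
    assume "\<exists>xs. walk V E xs \<and> hd xs = u \<and> last xs = v"
    then obtain xs where "walk V E xs" "hd xs = u" "last xs = v" by blast
    moreover have "length xs = Suc (length xs - 1)" using \<open>walk V E xs\<close> unfolding walk_def by simp
    ultimately show "\<exists>n. pw V E n u v" unfolding pw_def by blast
  qed (auto simp: pw_def)
  then show ?thesis unfolding connected_graph_def by simp
qed


lemma indep_fin: "finite V \<Longrightarrow> finite {I. independent_set V R I}"
  by (rule finite_subset[of _ "Pow V"]) (auto simp: independent_set_def)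

lemma indep_le: "finite V \<Longrightarrow> independent_set V R I \<Longrightarrow> card I \<le> independence_number V R"
  unfolding independence_number_def by (rule Max_ge) (auto intro: indep_fin)

lemma indep_ex: "finite V \<Longrightarrow> \<exists>I. independent_set V R I \<and> card I = independence_number V R"
proof -
  assume f: "finite V"
  have "independent_set V R {}" by (simp add: independent_set_def)
  then have "card ` {I. independent_set V R I} \<noteq> {}" by blast
  then have "independence_number V R \<in> card ` {I. independent_set V R I}"
    unfolding independence_number_def using indep_fin[OF f] by (intro Max_in) auto
  then show ?thesis by auto
qed

lemma finite_argmax: "finite A \<Longrightarrow> a \<in> A \<Longrightarrow> \<exists>x\<in>A. \<forall>y\<in>A. (f y :: nat) \<le> f x"
proof -
  assume "finite A" "a \<in> A"
  then have "Max (f ` A) \<in> f ` A" by (intro Max_in) auto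
  then obtain x where "x \<in> A" "f x = Max (f ` A)" by auto
  moreover have "\<forall>y\<in>A. f y \<le> Max (f ` A)" using \<open>finite A\<close> by auto
  ultimately show ?thesis by metis
qed

locale cg =
  fixes V :: "'a set" and E :: "'a \<Rightarrow> 'a \<Rightarrow> bool"
  assumes fin: "finite V"
    and EV2: "u \<in> V \<Longrightarrow> E u v \<Longrightarrow> v \<in> V"
    and Esym: "E u v \<Longrightarrow> E v u"
    and ex_pw: "u \<in> V \<Longrightarrow> v \<in> V \<Longrightarrow> \<exists>n. pw V E n u v"
begin


lemma dist_le_rr:
  assumes "u \<in> V" "v \<in> V" shows "gdist V E u v \<le> k \<longleftrightarrow> rr V E k u v"
proof -
  obtain n where n: "pw V E n u v" using ex_pw assms by blast
  have p: "pw V E (gdist V E u v) u v" unfolding gdist_pw by (rule LeastI) (rule n)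
  show ?thesis
  proof
    assume "gdist V E u v \<le> k" then show "rr V E k u v" unfolding rr_def using p by blast
  next
    assume "rr V E k u v"
    then obtain m where "m \<le> k" "pw V E m u v" unfolding rr_def by blast
    then have "gdist V E u v \<le> m" unfolding gdist_pw by (intro Least_le)
    then show "gdist V E u v \<le> k" using \<open>m \<le> k\<close> by simp
  qed
qed

lemma dist_0: "u \<in> V \<Longrightarrow> v \<in> V \<Longrightarrow> gdist V E u v = 0 \<longleftrightarrow> u = v"
  using dist_le_rr[of u v 0] rr_0[of V E u v] by simp

lemma dist_self: "u \<in> V \<Longrightarrow> gdist V E u u = 0"
  using dist_0 by blast

lemma dist_Suc:
  assumes "u \<in> V" "v \<in> V"
  shows "gdist V E u v \<le> Suc k \<longleftrightarrow> u = v \<or> (\<exists>w. E u w \<and> gdist V E w v \<le> k)"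
proof -
  have "gdist V E u v \<le> Suc k \<longleftrightarrow> rr V E (Suc k) u v" using dist_le_rr assms by blast
  also have "\<dots> \<longleftrightarrow> u = v \<or> (\<exists>w. E u w \<and> rr V E k w v)" using rr_Suc[of V E k u v] assms by blast
  also have "\<dots> \<longleftrightarrow> u = v \<or> (\<exists>w. E u w \<and> gdist V E w v \<le> k)"
    using dist_le_rr[OF _ assms(2)] EV2 assms(1) by blast
  finally show ?thesis .
qed

lemma dist_adj: "u \<in> V \<Longrightarrow> E u w \<Longrightarrow> gdist V E u w \<le> 1"
  using dist_Suc[of u w 0] EV2 dist_self by force

lemma tri:
  assumes "u \<in> V" "v \<in> V" "w \<in> V"
  shows "gdist V E u w \<le> gdist V E u v + gdist V E v w"
proof -
  have "\<forall>u\<in>V. gdist V E u v \<le> n \<longrightarrow> gdist V E u w \<le> n + gdist V E v w" for n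
  proof (induction n)
    case 0 then show ?case using dist_0 assms by auto
  next
    case (Suc n)
    show ?case
    proof (intro ballI impI)
      fix u assume u: "u \<in> V" "gdist V E u v \<le> Suc n"
      then have "u = v \<or> (\<exists>w'. E u w' \<and> gdist V E w' v \<le> n)" using dist_Suc assms by blast
      then show "gdist V E u w \<le> Suc n + gdist V E v w"
      proof
        assume "u = v" then show ?thesis by simp
      next
        assume "\<exists>w'. E u w' \<and> gdist V E w' v \<le> n"
        then obtain w' where w': "E u w'" "gdist V E w' v \<le> n" by blast
        then have "gdist V E w' w \<le> n + gdist V E v w" using Suc EV2 u(1) by blast
        then have "gdist V E u w \<le> Suc (n + gdist V E v w)"
          using dist_Suc[OF u(1) assms(3)] w'(1) by blast
        then show ?thesis by simp
      qed
    qed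
  qed
  then show ?thesis using assms by blast
qed

lemma sym_le:
  assumes "u \<in> V" "v \<in> V" shows "gdist V E v u \<le> gdist V E u v"
proof -
  have "\<forall>u\<in>V. gdist V E u v \<le> n \<longrightarrow> gdist V E v u \<le> n" for n
  proof (induction n)
    case 0 then show ?case using dist_0 assms by auto
  next
    case (Suc n)
    show ?case
    proof (intro ballI impI)
      fix u assume u: "u \<in> V" "gdist V E u v \<le> Suc n"
      then have "u = v \<or> (\<exists>w'. E u w' \<and> gdist V E w' v \<le> n)" using dist_Suc assms by blast
      then show "gdist V E v u \<le> Suc n"
      proof
        assume "u = v" then show ?thesis using dist_self assms by simp
      next
        assume "\<exists>w'. E u w' \<and> gdist V E w' v \<le> n"
        then obtain w' where w': "E u w'" "gdist V E w' v \<le> n" by blast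
        then have a: "gdist V E v w' \<le> n" using Suc EV2 u(1) by blast
        have b: "gdist V E w' u \<le> 1" using dist_adj Esym w'(1) EV2 u(1) by blast
        have "gdist V E v u \<le> gdist V E v w' + gdist V E w' u"
          using tri assms u EV2 w'(1) by blast
        then show ?thesis using a b by simp
      qed
    qed
  qed
  then show ?thesis using assms by blast
qed

lemma sym: "u \<in> V \<Longrightarrow> v \<in> V \<Longrightarrow> gdist V E u v = gdist V E v u"
  using sym_le by (simp add: antisym)

lemma step_down:
  assumes "u \<in> V" "v \<in> V" "u \<noteq> v"
  shows "\<exists>w. E u w \<and> gdist V E w v + 1 = gdist V E u v"
proof -
  have d: "gdist V E u v \<noteq> 0" using dist_0 assms by blast
  then have "gdist V E u v \<le> Suc (gdist V E u v - 1)" by simp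
  then obtain w where w: "E u w" "gdist V E w v \<le> gdist V E u v - 1"
    using dist_Suc assms by blast
  have "gdist V E u v \<le> gdist V E u w + gdist V E w v" using tri assms EV2 w(1) by blast
  then show ?thesis using w dist_adj[OF assms(1) w(1)] d by (intro exI[of _ w]) simp
qed

end

lemma cg_of_conn: "connected_graph V E \<Longrightarrow> cg V E"
  unfolding cg_def connected_pw graph_def by blast

context cg begin

lemma not_resolve_aux:
  assumes "u \<in> V" "v \<in> V" "w \<in> V" "w \<noteq> v"
    and eq: "gdist V E w u = gdist V E w v + gdist V E v u"
    and md: "maximally_distant V E v u"
  shows False
proof -
  obtain x where x: "E v x" "gdist V E x w + 1 = gdist V E v w" using step_down assms by metis
  have xV: "x \<in> V" using EV2 x(1) assms(2) by blast
  have "gdist V E u x \<le> gdist V E v u" using md x(1) unfolding maximally_distant_def by blast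
  moreover have "gdist V E u w \<le> gdist V E u x + gdist V E x w" using tri assms xV by blast
  moreover have "gdist V E u w = gdist V E w u" "gdist V E v w = gdist V E w v" using sym assms by auto
  ultimately show False using eq x(2) by linarith
qed

lemma mmd_cover:
  assumes S: "strong_resolving_set V E S" and a: "sr_adj V E u v"
  shows "u \<in> S \<or> v \<in> S"
proof (rule ccontr)
  assume n: "\<not> (u \<in> S \<or> v \<in> S)"
  have uv: "u \<in> V" "v \<in> V" and m: "maximally_distant V E u v" "maximally_distant V E v u"
    using a unfolding sr_adj_def mutually_maximally_distant_def by auto
  obtain w where w: "w \<in> S" "strongly_resolves V E w u v" using S uv unfolding strong_resolving_set_def by blast
  have wV: "w \<in> V" using S w(1) unfolding strong_resolving_set_def by blast
  have "w \<noteq> u" "w \<noteq> v" using n w(1) by auto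
  from w(2) show False unfolding strongly_resolves_def
  proof
    assume "gdist V E w u = gdist V E w v + gdist V E v u"
    then show False using not_resolve_aux[OF uv wV \<open>w \<noteq> v\<close>] m by blast
  next
    assume "gdist V E w v = gdist V E w u + gdist V E u v"
    then show False using not_resolve_aux[of v u w] uv wV \<open>w \<noteq> u\<close> m by blast
  qed
qed

lemma ext_md:
  assumes pq: "p \<in> V" "q \<in> V" and x: "x \<in> V" "gdist V E q x = gdist V E q p + gdist V E p x"
    and mx: "\<forall>z\<in>V. gdist V E q z = gdist V E q p + gdist V E p z \<longrightarrow> gdist V E q z \<le> gdist V E q x"
  shows "maximally_distant V E x q"
  unfolding maximally_distant_def
proof (intro allI impI)
  fix z assume e: "E x z"
  have zV: "z \<in> V" using EV2 e x(1) by blast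
  show "gdist V E q z \<le> gdist V E x q"
  proof (rule ccontr)
    assume c: "\<not> gdist V E q z \<le> gdist V E x q"
    have xz: "gdist V E x z \<le> 1" using dist_adj e x(1) by blast
    have "gdist V E q z \<le> gdist V E q x + gdist V E x z" using tri pq x zV by blast
    moreover have "gdist V E p z \<le> gdist V E p x + gdist V E x z" using tri pq x zV by blast
    moreover have "gdist V E q z \<le> gdist V E q p + gdist V E p z" using tri pq x zV by blast
    moreover have "gdist V E x q = gdist V E q x" using sym pq x by blast
    ultimately have "gdist V E q z = gdist V E q p + gdist V E p z" using c xz x(2) by linarith
    then have "gdist V E q z \<le> gdist V E q x" using mx zV by blast
    then show False using c \<open>gdist V E x q = gdist V E q x\<close> by linarith
  qed
qed

lemma cover_resolves:
  assumes S: "S \<subseteq> V" and cov: "\<forall>a b. sr_adj V E a b \<longrightarrow> a \<in> S \<or> b \<in> S"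
    and uv: "u \<in> V" "v \<in> V" "u \<noteq> v"
  shows "\<exists>w\<in>S. strongly_resolves V E w u v"
proof -
  define A where "A = {x\<in>V. gdist V E v x = gdist V E v u + gdist V E u x}"
  have "u \<in> A" unfolding A_def using uv dist_self by simp
  then obtain x where xA: "x \<in> A" and xm: "\<forall>z\<in>A. gdist V E v z \<le> gdist V E v x"
    using finite_argmax[of A u "gdist V E v"] fin unfolding A_def by auto
  have x: "x \<in> V" "gdist V E v x = gdist V E v u + gdist V E u x" using xA unfolding A_def by auto
  have mdx: "maximally_distant V E x v"
    using ext_md[OF uv(1,2) x] xm unfolding A_def by blast
  define B where "B = {y\<in>V. gdist V E x y = gdist V E x v + gdist V E v y}"
  have "v \<in> B" unfolding B_def using uv dist_self by simp
  then obtain y where yB: "y \<in> B" and ym: "\<forall>z\<in>B. gdist V E x z \<le> gdist V E x y"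
    using finite_argmax[of B v "gdist V E x"] fin unfolding B_def by auto
  have y: "y \<in> V" "gdist V E x y = gdist V E x v + gdist V E v y" using yB unfolding B_def by auto
  have mdy: "maximally_distant V E y x"
    using ext_md[OF uv(2) x(1) y] ym unfolding B_def by blast
  have mdx2: "maximally_distant V E x y"
    unfolding maximally_distant_def
  proof (intro allI impI)
    fix z assume e: "E x z"
    have zV: "z \<in> V" using EV2 e x(1) by blast
    have "gdist V E v z \<le> gdist V E x v" using mdx e unfolding maximally_distant_def by blast
    moreover have "gdist V E y z \<le> gdist V E y v + gdist V E v z" using tri y uv zV by blast
    moreover have "gdist V E y v = gdist V E v y" "gdist V E x y = gdist V E y x" using sym y uv x by auto
    ultimately show "gdist V E y z \<le> gdist V E x y" using y(2) by linarith
  qed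
  have "gdist V E u v \<noteq> 0" using dist_0 uv by blast
  moreover have "gdist V E u v = gdist V E v u" "gdist V E x v = gdist V E v x" using sym uv x by auto
  ultimately have "gdist V E x y \<noteq> 0" using x(2) y(2) by linarith
  then have "x \<noteq> y" using dist_self x by auto
  then have "sr_adj V E x y" unfolding sr_adj_def mutually_maximally_distant_def using x y mdx2 mdy by blast
  then have "x \<in> S \<or> y \<in> S" using cov by blast
  then show ?thesis
  proof
    assume "x \<in> S"
    have "gdist V E x v = gdist V E x u + gdist V E u v"
      using x(2) sym uv x by auto
    then show ?thesis using \<open>x \<in> S\<close> unfolding strongly_resolves_def by blast
  next
    assume "y \<in> S"
    have "gdist V E y x \<le> gdist V E y u + gdist V E u x" using tri x y uv by blast
    moreover have "gdist V E y u \<le> gdist V E y v + gdist V E v u" using tri x y uv by blast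
    moreover have "gdist V E y x = gdist V E x y" "gdist V E y v = gdist V E v y" "gdist V E x v = gdist V E v x"
      using sym x y uv by auto
    ultimately have "gdist V E y u = gdist V E y v + gdist V E v u" using x(2) y(2) by linarith
    then show ?thesis using \<open>y \<in> S\<close> unfolding strongly_resolves_def by blast
  qed
qed

lemma sdim_eq:
  assumes c2: "card V \<ge> 2"
  shows "sdim V E = card V - independence_number V (sr_adj V E)"
proof -
  let ?b = "independence_number V (sr_adj V E)"
  obtain I where I: "independent_set V (sr_adj V E) I" "card I = ?b" using indep_ex fin by blast
  have IV: "I \<subseteq> V" using I unfolding independent_set_def by blast
  define S where "S = V - I"
  have cov: "\<forall>a b. sr_adj V E a b \<longrightarrow> a \<in> S \<or> b \<in> S"
    using I(1) unfolding S_def independent_set_def sr_adj_def by blast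
  have srs: "strong_resolving_set V E S" unfolding strong_resolving_set_def
  proof (intro conjI ballI)
    show "S \<subseteq> V" unfolding S_def by blast
    fix u v assume uv: "u \<in> V" "v \<in> V"
    show "\<exists>w\<in>S. strongly_resolves V E w u v"
    proof (cases "u = v")
      case False then show ?thesis using cover_resolves[OF _ cov uv] unfolding S_def by blast
    next
      case True
      have "\<exists>v'\<in>V. v' \<noteq> u"
      proof (rule ccontr)
        assume "\<not> (\<exists>v'\<in>V. v' \<noteq> u)"
        then have "V \<subseteq> {u}" by blast
        then have "card V \<le> 1" using card_mono[of "{u}" V] by simp
        then show False using c2 by simp
      qed
      then obtain v' where v': "v' \<in> V" "v' \<noteq> u" by blast
      then obtain w where "w \<in> S" using cover_resolves[OF _ cov uv(1) v'(1)] unfolding S_def by blast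
      moreover have "strongly_resolves V E w u v" unfolding strongly_resolves_def
        using True uv dist_self by simp
      ultimately show ?thesis by blast
    qed
  qed
  have cS: "card S = card V - ?b" unfolding S_def using card_Diff_subset[OF finite_subset[OF IV fin] IV] I(2) by simp
  have lower: "card V - ?b \<le> card S'" if "strong_resolving_set V E S'" for S'
  proof -
    have S'V: "S' \<subseteq> V" using that unfolding strong_resolving_set_def by blast
    have "independent_set V (sr_adj V E) (V - S')"
      unfolding independent_set_def using mmd_cover[OF that] by blast
    then have "card (V - S') \<le> ?b" using indep_le fin by blast
    moreover have "card (V - S') = card V - card S'" using card_Diff_subset[OF finite_subset[OF S'V fin] S'V] .
    ultimately show ?thesis by linarith
  qed
  show ?thesis unfolding sdim_def
  proof (rule Least_equality)
    show "\<exists>S. strong_resolving_set V E S \<and> card S = card V - ?b" using srs cS by blast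
  next
    fix k assume "\<exists>S. strong_resolving_set V E S \<and> card S = k"
    then show "card V - ?b \<le> k" using lower by blast
  qed
qed

end

lemma rr_Suc': "rr V E (Suc k) u v \<longleftrightarrow> u \<in> V \<and> (\<exists>u'. (u' = u \<or> E u u') \<and> rr V E k u' v)"
  using rr_Suc[of V E k u v] rr_step[of u V _ E k v] rr_refl[of u V E k] by blast

lemma prod_adj_refl:
  "(w = (a, b) \<or> strong_prod_adj E1 E2 (a, b) w) \<longleftrightarrow>
   (fst w = a \<or> E1 a (fst w)) \<and> (snd w = b \<or> E2 b (snd w))"
  unfolding strong_prod_adj_def by (cases w) auto

lemma rr_prod:
  "rr (V1 \<times> V2) (strong_prod_adj E1 E2) k (a, b) (c, d) \<longleftrightarrow> rr V1 E1 k a c \<and> rr V2 E2 k b d"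
proof (induction k arbitrary: a b)
  case 0 then show ?case by (auto simp: rr_0)
next
  case (Suc k)
  have "rr (V1 \<times> V2) (strong_prod_adj E1 E2) (Suc k) (a, b) (c, d) \<longleftrightarrow>
     (a, b) \<in> V1 \<times> V2 \<and> (\<exists>w. (w = (a, b) \<or> strong_prod_adj E1 E2 (a, b) w) \<and>
        rr (V1 \<times> V2) (strong_prod_adj E1 E2) k w (c, d))"
    by (rule rr_Suc')
  also have "\<dots> \<longleftrightarrow> (a, b) \<in> V1 \<times> V2 \<and> (\<exists>a' b'. ((a' = a \<or> E1 a a') \<and> (b' = b \<or> E2 b b')) \<and>
        rr V1 E1 k a' c \<and> rr V2 E2 k b' d)"
    unfolding prod_adj_refl using Suc.IH by auto
  also have "\<dots> \<longleftrightarrow> (a \<in> V1 \<and> (\<exists>a'. (a' = a \<or> E1 a a') \<and> rr V1 E1 k a' c)) \<and>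
                      (b \<in> V2 \<and> (\<exists>b'. (b' = b \<or> E2 b b') \<and> rr V2 E2 k b' d))"
    by blast
  also have "\<dots> \<longleftrightarrow> rr V1 E1 (Suc k) a c \<and> rr V2 E2 (Suc k) b d"
    using rr_Suc'[of V1 E1 k a c] rr_Suc'[of V2 E2 k b d] by blast
  finally show ?case .
qed

locale cg2 = G: cg V1 E1 + H: cg V2 E2
  for V1 :: "'a set" and E1 and V2 :: "'b set" and E2
begin

lemma P_cg: "cg (V1 \<times> V2) (strong_prod_adj E1 E2)"
proof
  show "finite (V1 \<times> V2)" using G.fin H.fin by simp
  show "strong_prod_adj E1 E2 v u" if "strong_prod_adj E1 E2 u v" for u v
    using that G.Esym H.Esym unfolding strong_prod_adj_def by auto
  show "v \<in> V1 \<times> V2" if "u \<in> V1 \<times> V2" "strong_prod_adj E1 E2 u v" for u v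
    using that G.EV2 H.EV2 unfolding strong_prod_adj_def by (cases u, cases v) auto
  fix x y assume xy: "x \<in> V1 \<times> V2" "y \<in> V1 \<times> V2"
  obtain a b c d where x: "x = (a, b)" and y: "y = (c, d)" by (cases x, cases y) auto
  obtain n1 where "pw V1 E1 n1 a c" using G.ex_pw xy x y by auto
  then have r1: "rr V1 E1 (max n1 n2) a c" for n2 unfolding rr_def by (intro exI[of _ n1]) auto
  obtain n2 where "pw V2 E2 n2 b d" using H.ex_pw xy x y by auto
  then have r2: "rr V2 E2 (max n1 n2) b d" unfolding rr_def by (intro exI[of _ n2]) auto
  have "rr (V1 \<times> V2) (strong_prod_adj E1 E2) (max n1 n2) x y"
    using rr_prod[of V1 V2 E1 E2 "max n1 n2" a b c d] r1[of n2] r2 x y by simp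
  then show "\<exists>n. pw (V1 \<times> V2) (strong_prod_adj E1 E2) n x y" unfolding rr_def by blast
qed

sublocale P: cg "V1 \<times> V2" "strong_prod_adj E1 E2" by (rule P_cg)

lemma dist_prod:
  assumes "a \<in> V1" "c \<in> V1" "b \<in> V2" "d \<in> V2"
  shows "gdist (V1 \<times> V2) (strong_prod_adj E1 E2) (a, b) (c, d) = max (gdist V1 E1 a c) (gdist V2 E2 b d)"
proof -
  have k: "gdist (V1 \<times> V2) (strong_prod_adj E1 E2) (a, b) (c, d) \<le> k \<longleftrightarrow>
        gdist V1 E1 a c \<le> k \<and> gdist V2 E2 b d \<le> k" for k
    using P.dist_le_rr[of "(a, b)" "(c, d)" k] G.dist_le_rr[of a c k] H.dist_le_rr[of b d k]
      rr_prod[of V1 V2 E1 E2 k a b c d] assms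
    by simp
  show ?thesis using k[of "max (gdist V1 E1 a c) (gdist V2 E2 b d)"]
      k[of "gdist (V1 \<times> V2) (strong_prod_adj E1 E2) (a, b) (c, d)"]
    by (simp add: antisym)
qed

end

context cg begin
lemma nb_bound:
  assumes "a \<in> V" "c \<in> V" "a' = a \<or> E a a'"
  shows "gdist V E c a' \<le> gdist V E a c + 1 \<and>
         (maximally_distant V E a c \<longrightarrow> gdist V E c a' \<le> gdist V E a c)"
  using assms(3)
proof
  assume "a' = a" then show ?thesis using sym assms by simp
next
  assume e: "E a a'"
  have a'V: "a' \<in> V" using EV2 assms(1) e by blast
  have "gdist V E c a' \<le> gdist V E c a + gdist V E a a'" using tri assms a'V by blast
  moreover have "gdist V E a a' \<le> 1" using dist_adj assms(1) e by blast
  moreover have "gdist V E c a = gdist V E a c" using sym assms by blast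
  ultimately show ?thesis using e unfolding maximally_distant_def by auto
qed
end

context cg2 begin

lemma md_prod:
  assumes V: "a \<in> V1" "c \<in> V1" "b \<in> V2" "d \<in> V2"
  shows "maximally_distant (V1 \<times> V2) (strong_prod_adj E1 E2) (a, b) (c, d) \<longleftrightarrow>
     (gdist V1 E1 a c > gdist V2 E2 b d \<and> maximally_distant V1 E1 a c) \<or>
     (gdist V1 E1 a c < gdist V2 E2 b d \<and> maximally_distant V2 E2 b d) \<or>
     (gdist V1 E1 a c = gdist V2 E2 b d \<and> maximally_distant V1 E1 a c \<and> maximally_distant V2 E2 b d)"
    (is "?L \<longleftrightarrow> ?R")
proof
  assume m: ?L
  have dac: "gdist (V1 \<times> V2) (strong_prod_adj E1 E2) (a, b) (c, d) = max (gdist V1 E1 a c) (gdist V2 E2 b d)"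
    using dist_prod V by blast
  have A: "gdist V1 E1 c a' \<le> max (gdist V1 E1 a c) (gdist V2 E2 b d)" if e: "E1 a a'" for a'
  proof -
    have a'V: "a' \<in> V1" using G.EV2 V e by blast
    have "strong_prod_adj E1 E2 (a, b) (a', b)" using e unfolding strong_prod_adj_def by simp
    then have "gdist (V1 \<times> V2) (strong_prod_adj E1 E2) (c, d) (a', b) \<le> max (gdist V1 E1 a c) (gdist V2 E2 b d)"
      using m dac unfolding maximally_distant_def by simp
    moreover have "gdist (V1 \<times> V2) (strong_prod_adj E1 E2) (c, d) (a', b) = max (gdist V1 E1 c a') (gdist V2 E2 d b)"
      using dist_prod V a'V by blast
    ultimately show ?thesis by simp
  qed
  have B: "gdist V2 E2 d b' \<le> max (gdist V1 E1 a c) (gdist V2 E2 b d)" if e: "E2 b b'" for b'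
  proof -
    have b'V: "b' \<in> V2" using H.EV2 V e by blast
    have "strong_prod_adj E1 E2 (a, b) (a, b')" using e unfolding strong_prod_adj_def by simp
    then have "gdist (V1 \<times> V2) (strong_prod_adj E1 E2) (c, d) (a, b') \<le> max (gdist V1 E1 a c) (gdist V2 E2 b d)"
      using m dac unfolding maximally_distant_def by simp
    moreover have "gdist (V1 \<times> V2) (strong_prod_adj E1 E2) (c, d) (a, b') = max (gdist V1 E1 c a) (gdist V2 E2 d b')"
      using dist_prod V b'V by blast
    ultimately show ?thesis by simp
  qed
  show ?R
  proof (cases "gdist V1 E1 a c > gdist V2 E2 b d")
    case True
    then have "maximally_distant V1 E1 a c" using A unfolding maximally_distant_def by (simp add: max_def)
    then show ?thesis using True by blast
  next
    case False
    show ?thesis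
    proof (cases "gdist V1 E1 a c < gdist V2 E2 b d")
      case True
      then have "maximally_distant V2 E2 b d" using B unfolding maximally_distant_def by (simp add: max_def)
      then show ?thesis using True by blast
    next
      case F2: False
      then have eq: "gdist V1 E1 a c = gdist V2 E2 b d" using False by simp
      have "maximally_distant V1 E1 a c" using A eq unfolding maximally_distant_def by simp
      moreover have "maximally_distant V2 E2 b d" using B eq unfolding maximally_distant_def by simp
      ultimately show ?thesis using eq by blast
    qed
  qed
next
  assume r: ?R
  show ?L unfolding maximally_distant_def
  proof (intro allI impI)
    fix w assume e: "strong_prod_adj E1 E2 (a, b) w"
    obtain a' b' where w: "w = (a', b')" by (cases w) auto
    have nb: "a' = a \<or> E1 a a'" "b' = b \<or> E2 b b'" using e w prod_adj_refl[of w a b E1 E2] by auto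
    have a'V: "a' \<in> V1" using nb(1) G.EV2 V by blast
    have b'V: "b' \<in> V2" using nb(2) H.EV2 V by blast
    have d1: "gdist (V1 \<times> V2) (strong_prod_adj E1 E2) (c, d) w = max (gdist V1 E1 c a') (gdist V2 E2 d b')"
      using dist_prod V a'V b'V w by blast
    have d2: "gdist (V1 \<times> V2) (strong_prod_adj E1 E2) (a, b) (c, d) = max (gdist V1 E1 a c) (gdist V2 E2 b d)"
      using dist_prod V by blast
    have g: "gdist V1 E1 c a' \<le> gdist V1 E1 a c + 1 \<and>
         (maximally_distant V1 E1 a c \<longrightarrow> gdist V1 E1 c a' \<le> gdist V1 E1 a c)"
      using G.nb_bound V nb by blast
    have h: "gdist V2 E2 d b' \<le> gdist V2 E2 b d + 1 \<and>
         (maximally_distant V2 E2 b d \<longrightarrow> gdist V2 E2 d b' \<le> gdist V2 E2 b d)"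
      using H.nb_bound V nb by blast
    show "gdist (V1 \<times> V2) (strong_prod_adj E1 E2) (c, d) w \<le> gdist (V1 \<times> V2) (strong_prod_adj E1 E2) (a, b) (c, d)"
      unfolding d1 d2 using r g h by (auto simp: max_def)
  qed
qed

end

context cg2 begin

lemma srP_imp:
  assumes s: "sr_adj (V1 \<times> V2) (strong_prod_adj E1 E2) (a, b) (c, d)"
  shows "sr_adj V1 E1 a c \<or> sr_adj V2 E2 b d"
proof -
  have V: "a \<in> V1" "c \<in> V1" "b \<in> V2" "d \<in> V2" and ne: "(a, b) \<noteq> (c, d)"
    and m1: "maximally_distant (V1 \<times> V2) (strong_prod_adj E1 E2) (a, b) (c, d)"
    and m2: "maximally_distant (V1 \<times> V2) (strong_prod_adj E1 E2) (c, d) (a, b)"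
    using s unfolding sr_adj_def mutually_maximally_distant_def by auto
  have s1: "gdist V1 E1 c a = gdist V1 E1 a c" using G.sym V by blast
  have s2: "gdist V2 E2 d b = gdist V2 E2 b d" using H.sym V by blast
  have z1: "gdist V1 E1 a c = 0 \<longleftrightarrow> a = c" using G.dist_0[OF V(1,2)] .
  have z2: "gdist V2 E2 b d = 0 \<longleftrightarrow> b = d" using H.dist_0[OF V(3,4)] .
  note r1 = m1[unfolded md_prod[OF V]] and r2 = m2[unfolded md_prod[OF V(2,1,4,3)] s1 s2]
  show ?thesis unfolding sr_adj_def mutually_maximally_distant_def
    using r1 r2 z1 z2 V ne by auto
qed

lemma imp_srP:
  assumes V: "a \<in> V1" "c \<in> V1" "b \<in> V2" "d \<in> V2"
    and h1: "a = c \<or> sr_adj V1 E1 a c" and h2: "b = d \<or> sr_adj V2 E2 b d" and ne: "(a, b) \<noteq> (c, d)"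
  shows "sr_adj (V1 \<times> V2) (strong_prod_adj E1 E2) (a, b) (c, d)"
proof -
  have s1: "gdist V1 E1 c a = gdist V1 E1 a c" using G.sym V by blast
  have s2: "gdist V2 E2 d b = gdist V2 E2 b d" using H.sym V by blast
  have z1: "gdist V1 E1 a c = 0 \<longleftrightarrow> a = c" using G.dist_0[OF V(1,2)] .
  have z2: "gdist V2 E2 b d = 0 \<longleftrightarrow> b = d" using H.dist_0[OF V(3,4)] .
  have g: "a \<noteq> c \<Longrightarrow> maximally_distant V1 E1 a c \<and> maximally_distant V1 E1 c a"
    using h1 unfolding sr_adj_def mutually_maximally_distant_def by blast
  have h: "b \<noteq> d \<Longrightarrow> maximally_distant V2 E2 b d \<and> maximally_distant V2 E2 d b"
    using h2 unfolding sr_adj_def mutually_maximally_distant_def by blast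
  have "maximally_distant (V1 \<times> V2) (strong_prod_adj E1 E2) (a, b) (c, d) \<and>
        maximally_distant (V1 \<times> V2) (strong_prod_adj E1 E2) (c, d) (a, b)"
  proof -
    note u = md_prod[OF V] md_prod[OF V(2,1,4,3)]
    show ?thesis
    proof (cases "a = c")
      case True
      then have "b \<noteq> d" using ne by simp
      then have "gdist V1 E1 a c < gdist V2 E2 b d" using True z1 z2 by simp
      then show ?thesis using u s1 s2 h \<open>b \<noteq> d\<close> by simp
    next
      case False
      show ?thesis
      proof (cases "b = d")
        case True
        then have "gdist V1 E1 a c > gdist V2 E2 b d" using False z1 z2 by simp
        then show ?thesis using u s1 s2 g False by simp
      next
        case F2: False
        have "gdist V1 E1 a c > gdist V2 E2 b d \<or> gdist V1 E1 a c < gdist V2 E2 b d \<or>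
              gdist V1 E1 a c = gdist V2 E2 b d" by arith
        then show ?thesis using u s1 s2 g h False F2 by auto
      qed
    qed
  qed
  then show ?thesis unfolding sr_adj_def mutually_maximally_distant_def using V ne by auto
qed

lemma beta_prod:
  assumes part: "partition_on V1 P" "card P = independence_number V1 (sr_adj V1 E1)"
     "\<forall>C\<in>P. clique V1 (sr_adj V1 E1) C"
  shows "independence_number (V1 \<times> V2) (sr_adj (V1 \<times> V2) (strong_prod_adj E1 E2)) =
     independence_number V1 (sr_adj V1 E1) * independence_number V2 (sr_adj V2 E2)"
    (is "?bP = ?b1 * ?b2")
proof (rule antisym)
  obtain I1 where I1: "independent_set V1 (sr_adj V1 E1) I1" "card I1 = ?b1" using indep_ex G.fin by blast
  obtain I2 where I2: "independent_set V2 (sr_adj V2 E2) I2" "card I2 = ?b2" using indep_ex H.fin by blast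
  have "independent_set (V1 \<times> V2) (sr_adj (V1 \<times> V2) (strong_prod_adj E1 E2)) (I1 \<times> I2)"
    unfolding independent_set_def
  proof (intro conjI ballI)
    show "I1 \<times> I2 \<subseteq> V1 \<times> V2" using I1 I2 unfolding independent_set_def by blast
    fix x y assume "x \<in> I1 \<times> I2" "y \<in> I1 \<times> I2"
    then obtain a b c d where "x = (a, b)" "y = (c, d)" "a \<in> I1" "c \<in> I1" "b \<in> I2" "d \<in> I2" by auto
    then show "\<not> sr_adj (V1 \<times> V2) (strong_prod_adj E1 E2) x y"
      using srP_imp[of a b c d] I1(1) I2(1) unfolding independent_set_def by blast
  qed
  then have "card (I1 \<times> I2) \<le> ?bP" using indep_le P.fin by blast
  then show "?b1 * ?b2 \<le> ?bP" using I1 I2 card_cartesian_product by metis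
next
  obtain J where J: "independent_set (V1 \<times> V2) (sr_adj (V1 \<times> V2) (strong_prod_adj E1 E2)) J" "card J = ?bP"
    using indep_ex P.fin by blast
  have JV: "J \<subseteq> V1 \<times> V2" using J unfolding independent_set_def by blast
  have finP: "finite P" using part(1) G.fin unfolding partition_on_def by (metis finite_UnionD)
  have "J = (\<Union>C\<in>P. J \<inter> (C \<times> V2))" using JV part(1) unfolding partition_on_def by auto
  then have "card J \<le> (\<Sum>C\<in>P. card (J \<inter> (C \<times> V2)))" using card_UN_le[OF finP] by metis
  also have "\<dots> \<le> card P * ?b2"
  proof (rule sum_bounded_above[where K = "?b2", simplified])
    fix C assume CP: "C \<in> P"
    have cl: "clique V1 (sr_adj V1 E1) C" using part(3) CP by blast
    have CV: "C \<subseteq> V1" using cl unfolding clique_def by blast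
    let ?K = "J \<inter> (C \<times> V2)"
    have nadj: False if "x \<in> ?K" "y \<in> ?K" "x \<noteq> y"
      "snd x = snd y \<or> sr_adj V2 E2 (snd x) (snd y)" for x y
    proof -
      obtain a b c d where xy: "x = (a, b)" "y = (c, d)" by (cases x, cases y) auto
      have V: "a \<in> V1" "c \<in> V1" "b \<in> V2" "d \<in> V2" using that xy CV by auto
      have "a = c \<or> sr_adj V1 E1 a c" using cl that xy unfolding clique_def by auto
      then have "sr_adj (V1 \<times> V2) (strong_prod_adj E1 E2) (a, b) (c, d)"
        using imp_srP[OF V] that xy by auto
      then show False using J(1) that xy unfolding independent_set_def by blast
    qed
    have inj: "inj_on snd ?K"
      by (rule inj_onI) (use nadj in blast)
    have "independent_set V2 (sr_adj V2 E2) (snd ` ?K)"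
      unfolding independent_set_def
    proof (intro conjI ballI)
      show "snd ` ?K \<subseteq> V2" by auto
      fix u v assume "u \<in> snd ` ?K" "v \<in> snd ` ?K"
      then obtain x y where "x \<in> ?K" "y \<in> ?K" "u = snd x" "v = snd y" by blast
      then show "\<not> sr_adj V2 E2 u v" using nadj[of x y] unfolding sr_adj_def by auto
    qed
    then have "card (snd ` ?K) \<le> ?b2" using indep_le H.fin by blast
    then show "card ?K \<le> ?b2" using card_image[OF inj] by simp
  qed
  finally show "?bP \<le> ?b1 * ?b2" using J(2) part(2) by simp
qed

end

lemma indep_le_card: "finite V \<Longrightarrow> independence_number V R \<le> card V"
  using indep_ex[of V R] by (metis card_mono independent_set_def)

theorem theorem15:
  fixes V1 :: "'a set" and E1 :: "'a \<Rightarrow> 'a \<Rightarrow> bool"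
    and V2 :: "'b set" and E2 :: "'b \<Rightarrow> 'b \<Rightarrow> bool"
  assumes "connected_graph V1 E1" and "card V1 \<ge> 2"
    and "connected_graph V2 E2" and "card V2 \<ge> 2"
    and "\<exists>P. partition_on V1 P \<and> card P = independence_number V1 (sr_adj V1 E1)
              \<and> (\<forall>C\<in>P. clique V1 (sr_adj V1 E1) C)"
  shows "int (sdim (V1 \<times> V2) (strong_prod_adj E1 E2))
         = int (card V2) * int (sdim V1 E1) + int (card V1) * int (sdim V2 E2)
           - int (sdim V1 E1) * int (sdim V2 E2)"
proof -
  interpret cg2 V1 E1 V2 E2
    unfolding cg2_def using cg_of_conn[OF assms(1)] cg_of_conn[OF assms(3)] by blast
  obtain P where P: "partition_on V1 P" "card P = independence_number V1 (sr_adj V1 E1)"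
     "\<forall>C\<in>P. clique V1 (sr_adj V1 E1) C" using assms(5) by blast
  let ?b1 = "independence_number V1 (sr_adj V1 E1)"
  let ?b2 = "independence_number V2 (sr_adj V2 E2)"
  have b1: "?b1 \<le> card V1" using indep_le_card G.fin by blast
  have b2: "?b2 \<le> card V2" using indep_le_card H.fin by blast
  have s1: "sdim V1 E1 = card V1 - ?b1" using G.sdim_eq assms(2) by blast
  have s2: "sdim V2 E2 = card V2 - ?b2" using H.sdim_eq assms(4) by blast
  have cP: "card (V1 \<times> V2) = card V1 * card V2" by (rule card_cartesian_product)
  have "card V1 * card V2 \<ge> 2 * 2" using assms(2,4) by (intro mult_le_mono) auto
  then have sP: "sdim (V1 \<times> V2) (strong_prod_adj E1 E2) = card V1 * card V2 - ?b1 * ?b2"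
    using P.sdim_eq beta_prod[OF P] cP by simp
  have le: "?b1 * ?b2 \<le> card V1 * card V2" using b1 b2 by (intro mult_le_mono)
  show ?thesis unfolding sP s1 s2
    using b1 b2 le by (simp add: of_nat_diff algebra_simps)
qed

end
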